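(* Let $\Sigma=\{(x,u(x)):x\in\Omega\}$ be a smooth strictly locally convex graph in $\mathbb{H}^{n+1}$ over a bounded domain $\Omega\subset\mathbb{R}^n$, with $u\ge\epsilon$ in $\Omega$ and $u=\epsilon$ on $\partial\Omega$ for some $\epsilon>0$. Then \[ \frac{1}{\nu^{n+1}}\le\max\Big\{\frac{\max_\Omega u}{u},\ \max_{\partial\Omega}\frac{1}{\nu^{n+1}}\Big\}\quad\text{in }\Omega. \]
   Context: Half-space model $\mathbb{H}^{n+1}=\{(x,x_{n+1}):x_{n+1}>0\}$, metric $\sum dx_i^2/x_{n+1}^2$. The graph is oriented upward; strictly locally convex means all hyperbolic principal curvatures are positive, equivalently the matrix $\{\delta_{ij}+u_iu_j+uu_{ij}\}$ is positive definite. $\nu^{n+1}=1/\sqrt{1+|Du|^2}$ is the last component of the upward Euclidean unit normal. *)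

theory Defs
  imports "HOL-Analysis.Analysis"
begin

definition pdiff :: "'n::finite \<Rightarrow> (real^'n \<Rightarrow> real) \<Rightarrow> real^'n \<Rightarrow> real" where
  "pdiff i f x = frechet_derivative f (at x) (axis i 1)"

fun Ck_on :: "nat \<Rightarrow> (real^'n::finite) set \<Rightarrow> (real^'n \<Rightarrow> real) \<Rightarrow> bool" where
  "Ck_on 0 U f = continuous_on U f"
| "Ck_on (Suc k) U f = (continuous_on U f \<and> f differentiable_on U \<and> (\<forall>i. Ck_on k U (pdiff i f)))"

definition smooth_on :: "(real^'n::finite) set \<Rightarrow> (real^'n \<Rightarrow> real) \<Rightarrow> bool" where
  "smooth_on U f = (\<forall>k. Ck_on k U f)"

definition grad :: "(real^'n::finite \<Rightarrow> real) \<Rightarrow> real^'n \<Rightarrow> real^'n" where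
  "grad f x = (\<chi> i. pdiff i f x)"

definition hess :: "(real^'n::finite \<Rightarrow> real) \<Rightarrow> real^'n \<Rightarrow> real^'n^'n" where
  "hess f x = (\<chi> i j. pdiff j (pdiff i f) x)"

definition convex_matrix :: "(real^'n::finite \<Rightarrow> real) \<Rightarrow> real^'n \<Rightarrow> real^'n^'n" where
  "convex_matrix u x = (\<chi> i j. (if i = j then 1 else 0) + grad u x $ i * grad u x $ j + u x * hess u x $ i $ j)"

definition pos_def :: "real^'n^'n::finite \<Rightarrow> bool" where
  "pos_def A = (\<forall>\<xi>. \<xi> \<noteq> 0 \<longrightarrow> \<xi> \<bullet> (A *v \<xi>) > 0)"

text \<open>Strict local convexity of the graph of u over Omega (hyperbolic principal curvatures positive).\<close>
definition strictly_locally_convex_graph :: "(real^'n::finite \<Rightarrow> real) \<Rightarrow> (real^'n) set \<Rightarrow> bool" where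
  "strictly_locally_convex_graph u \<Omega> = (\<forall>x\<in>\<Omega>. pos_def (convex_matrix u x))"

text \<open>Last component of the upward Euclidean unit normal of the graph.\<close>
definition nu_last :: "(real^'n::finite \<Rightarrow> real) \<Rightarrow> real^'n \<Rightarrow> real" where
  "nu_last u x = 1 / sqrt (1 + (norm (grad u x))\<^sup>2)"

end

theory Submission
  imports Defs
begin

lemma posdef_kernel:
  fixes M :: "real^'n^'n::finite"
  assumes "pos_def M" and "\<And>k. (\<Sum>i\<in>UNIV. M$i$k * v$i) = 0"
  shows "v = 0"
proof (rule ccontr)
  assume "v \<noteq> 0"
  hence "v \<bullet> (M *v v) > 0" using assms(1) unfolding pos_def_def by blast
  moreover have "v \<bullet> (M *v v) = (\<Sum>k\<in>UNIV. \<Sum>j\<in>UNIV. v$k * M$k$j * v$j)"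
    by (simp add: inner_vec_def matrix_vector_mult_def sum_distrib_left mult.assoc)
  also have "\<dots> = (\<Sum>j\<in>UNIV. v$j * (\<Sum>k\<in>UNIV. M$k$j * v$k))"
    by (subst sum.swap) (simp add: sum_distrib_left mult.commute mult.left_commute)
  also have "\<dots> = 0" using assms(2) by simp
  finally show False by simp
qed

lemma norm_sq_sum: "(norm (x::real^'n::finite))\<^sup>2 = (\<Sum>i\<in>UNIV. (x$i)\<^sup>2)"
  by (simp only: power2_norm_eq_inner) (simp add: inner_vec_def power2_eq_square)

theorem proposition3p2:
  fixes u :: "real^'n \<Rightarrow> real" and \<Omega> U :: "(real^'n) set" and \<epsilon> :: real
  assumes "open \<Omega>" and "connected \<Omega>" and "\<Omega> \<noteq> {}" and "bounded \<Omega>"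
    and "open U" and "closure \<Omega> \<subseteq> U" and "smooth_on U u"
    and "strictly_locally_convex_graph u \<Omega>"
    and "\<epsilon> > 0"
    and "\<forall>x\<in>\<Omega>. u x \<ge> \<epsilon>" and "\<forall>x\<in>frontier \<Omega>. u x = \<epsilon>"
    and "x \<in> \<Omega>"
  shows "1 / nu_last u x \<le> max ((SUP y\<in>\<Omega>. u y) / u x) (SUP y\<in>frontier \<Omega>. 1 / nu_last u y)"
proof -
  define g where "g i = pdiff i u" for i
  have C2: "Ck_on 2 U u" using assms(7) unfolding smooth_on_def by blast
  hence cu: "continuous_on U u" and du: "u differentiable_on U"
    and cg: "\<And>i. continuous_on U (g i)" and dg: "\<And>i. g i differentiable_on U"
    by (auto simp: numeral_2_eq_2 g_def)
  have grad_g: "grad u y $ i = g i y" for y i by (simp add: grad_def g_def)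
  have nsq: "(norm (grad u y))\<^sup>2 = (\<Sum>i\<in>UNIV. (g i y)\<^sup>2)" for y
    by (simp add: norm_sq_sum grad_g)
  define q where "q y = 1 + (\<Sum>i\<in>UNIV. (g i y)\<^sup>2)" for y
  have q1: "q y \<ge> 1" for y unfolding q_def by (simp add: sum_nonneg)
  have invnu: "1 / nu_last u y = sqrt (q y)" for y
    by (simp add: nu_last_def q_def nsq)
  define f where "f y = (u y)\<^sup>2 * q y" for y
  have cU: "closure \<Omega> \<subseteq> U" by fact
  have comp: "compact (closure \<Omega>)" using assms(4) by (simp add: compact_closure)
  have cf: "continuous_on (closure \<Omega>) f"
    unfolding f_def q_def
    by (intro continuous_intros continuous_on_subset[OF cu cU] continuous_on_subset[OF cg cU])
  obtain x0 where x0: "x0 \<in> closure \<Omega>" and x0max: "\<forall>y\<in>closure \<Omega>. f y \<le> f x0"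
    using continuous_attains_sup[OF comp _ cf] assms(3) by auto
  have cuc: "continuous_on (closure \<Omega>) u" using continuous_on_subset[OF cu cU] .
  have bddu: "bdd_above (u ` \<Omega>)"
    using compact_imp_bounded[OF compact_continuous_image[OF cuc comp]]
    by (meson bdd_above_mono bounded_imp_bdd_above closure_subset image_mono)
  define S where "S = (SUP y\<in>\<Omega>. u y)"
  have uS: "u y \<le> S" if "y \<in> \<Omega>" for y unfolding S_def using bddu that by (simp add: cSUP_upper)
  have fr_ne: "frontier \<Omega> \<noteq> {}"
    using frontier_not_empty assms(3) assms(4) not_bounded_UNIV by blast
  have frc: "frontier \<Omega> \<subseteq> closure \<Omega>" by (simp add: frontier_def)
  have cq: "continuous_on (frontier \<Omega>) (\<lambda>y. 1 / nu_last u y)"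
    unfolding invnu q_def
    by (intro continuous_intros continuous_on_subset[OF cg] order.trans[OF frc cU])
  have bddq: "bdd_above ((\<lambda>y. 1 / nu_last u y) ` frontier \<Omega>)"
    using compact_imp_bounded[OF compact_continuous_image[OF cq compact_frontier_bounded[OF assms(4)]]]
    by (simp add: bounded_imp_bdd_above)
  define B where "B = (SUP y\<in>frontier \<Omega>. 1 / nu_last u y)"
  have qB: "sqrt (q y) \<le> B" if "y \<in> frontier \<Omega>" for y
    using cSUP_upper[OF that bddq] unfolding B_def invnu by simp
  have ux: "u x \<ge> \<epsilon>" using assms(10,12) by auto
  have upos: "u x > 0" using ux assms(9) by linarith
  have B0: "B \<ge> 0" using qB fr_ne by (meson ex_in_conv order.trans real_sqrt_ge_zero q1 zero_le_one)
  have key: "f x0 \<le> (max S (u x * B))\<^sup>2"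
  proof (cases "x0 \<in> \<Omega>")
    case True
    have x0U: "x0 \<in> U" using True cU closure_subset by blast
    have u0: "u x0 > 0" using True assms(9,10) by force
    have "u differentiable (at x0)" using du x0U assms(5)
      by (simp add: differentiable_on_eq_differentiable_at)
    hence hu: "(u has_derivative frechet_derivative u (at x0)) (at x0)"
      by (simp add: frechet_derivative_works)
    have "g i differentiable (at x0)" for i using dg x0U assms(5)
      by (simp add: differentiable_on_eq_differentiable_at)
    hence hg: "\<And>i. (g i has_derivative frechet_derivative (g i) (at x0)) (at x0)"
      by (simp add: frechet_derivative_works)
    define Du where "Du = frechet_derivative u (at x0)"
    define Dg where "Dg i = frechet_derivative (g i) (at x0)" for i
    have hf: "(f has_derivative (\<lambda>v. 2 * u x0 * Du v * q x0 + (u x0)\<^sup>2 * (\<Sum>i\<in>UNIV. 2 * g i x0 * Dg i v))) (at x0)"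
      unfolding f_def q_def Du_def Dg_def
      apply (rule derivative_eq_intros hu hg refl | simp)+
      apply (rule ext)
      apply (simp add: mult_ac)
      done
    have f'0: "(\<lambda>v. 2 * u x0 * Du v * q x0 + (u x0)\<^sup>2 * (\<Sum>i\<in>UNIV. 2 * g i x0 * Dg i v)) = (\<lambda>v. 0)"
      using differential_zero_maxmin[OF True assms(1) hf] x0max closure_subset by blast
    define H where "H = hess u x0"
    have DuE: "Du (axis k 1) = g k x0" for k by (simp add: Du_def g_def pdiff_def)
    have DgE: "Dg i (axis k 1) = H $ i $ k" for i k by (simp add: Dg_def g_def pdiff_def H_def hess_def)
    have ker: "(\<Sum>i\<in>UNIV. convex_matrix u x0 $ i $ k * grad u x0 $ i) = 0" for k
    proof -
      have e: "2 * u x0 * g k x0 * q x0 + (u x0)\<^sup>2 * (\<Sum>i\<in>UNIV. 2 * g i x0 * H $ i $ k) = 0"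
        using fun_cong[OF f'0, of "axis k 1"] by (simp add: DuE DgE)
      have s: "(\<Sum>i\<in>UNIV. convex_matrix u x0 $ i $ k * grad u x0 $ i)
          = g k x0 * q x0 + u x0 * (\<Sum>i\<in>UNIV. g i x0 * H $ i $ k)"
      proof -
        have d: "(\<Sum>i\<in>UNIV. (if i = k then 1 else 0) * g i x0) = g k x0"
        proof -
          have "(\<Sum>i\<in>UNIV. (if i = k then 1 else 0) * g i x0) = (\<Sum>i\<in>UNIV. if i = k then g i x0 else 0)"
            by (rule sum.cong) auto
          thus ?thesis by simp
        qed
        have "(\<Sum>i\<in>UNIV. convex_matrix u x0 $ i $ k * grad u x0 $ i)
           = (\<Sum>i\<in>UNIV. (if i = k then 1 else 0) * g i x0) + (\<Sum>i\<in>UNIV. g i x0 * g k x0 * g i x0)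
             + (\<Sum>i\<in>UNIV. u x0 * H $ i $ k * g i x0)"
          by (simp add: convex_matrix_def grad_g H_def distrib_right sum.distrib del: mult_if_delta)
        also have "\<dots> = g k x0 * q x0 + u x0 * (\<Sum>i\<in>UNIV. g i x0 * H $ i $ k)"
          unfolding d by (simp add: q_def algebra_simps sum_distrib_left power2_eq_square)
        finally show ?thesis .
      qed
      have "2 * u x0 * (g k x0 * q x0 + u x0 * (\<Sum>i\<in>UNIV. g i x0 * H $ i $ k)) = 0"
        using e by (simp add: algebra_simps power2_eq_square sum_distrib_left)
      thus ?thesis using s u0 by simp
    qed
    have "grad u x0 = 0"
      using posdef_kernel[OF _ ker] assms(8) True unfolding strictly_locally_convex_graph_def by blast
    hence "q x0 = 1" using nsq[of x0] q_def by simp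
    hence "f x0 = (u x0)\<^sup>2" by (simp add: f_def)
    also have "\<dots> \<le> S\<^sup>2" using uS[OF True] u0 by (simp add: power_mono)
    also have "\<dots> \<le> (max S (u x * B))\<^sup>2" using uS[OF True] u0 by (intro power_mono) auto
    finally show ?thesis .
  next
    case False
    hence fr: "x0 \<in> frontier \<Omega>" using x0 assms(1) by (simp add: frontier_def interior_open)
    hence ue: "u x0 = \<epsilon>" using assms(11) by blast
    have "q x0 \<le> B\<^sup>2" using qB[OF fr] q1[of x0]
      by (metis order.trans power_mono real_sqrt_ge_zero real_sqrt_pow2 zero_le_one)
    hence "f x0 \<le> \<epsilon>\<^sup>2 * B\<^sup>2" unfolding f_def ue by (simp add: mult_left_mono)
    also have "\<dots> = (\<epsilon> * B)\<^sup>2" by (simp add: power_mult_distrib)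
    also have "\<dots> \<le> (u x * B)\<^sup>2" using ux assms(9) B0 by (intro power_mono mult_right_mono) auto
    also have "\<dots> \<le> (max S (u x * B))\<^sup>2" using upos B0 by (intro power_mono) auto
    finally show ?thesis .
  qed
  define M where "M = max S (u x * B)"
  have M0: "M \<ge> 0" using upos B0 unfolding M_def by (simp add: le_max_iff_disj)
  have "f x \<le> M\<^sup>2" using key x0max assms(12) closure_subset M_def by fastforce
  hence "sqrt (f x) \<le> M" using M0 by (metis real_sqrt_le_mono real_sqrt_abs abs_of_nonneg)
  moreover have "sqrt (f x) = u x * sqrt (q x)" using upos by (simp add: f_def real_sqrt_mult)
  ultimately have "sqrt (q x) \<le> M / u x" using upos by (simp add: field_simps mult.commute)
  also have "M / u x = max (S / u x) B" unfolding M_def using upos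
    by (simp add: max_divide_distrib_right)
  finally show ?thesis unfolding invnu S_def B_def .
qed

end
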